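(* Let $A$ and $B$ be $d\times d$ matrices over $\mathbb{C}$, where $A$ has rank one, and let $\mathsf{A}=\{A,B\}$. Then either $\varrho(\mathsf{A})=\rho(B)$, or there exists an integer $n \geq 0$ such that $\varrho(\mathsf{A})=\rho(AB^n)^{1/(n+1)}$.
   Context: For a square matrix $A$, $\rho(A)$ denotes its ordinary spectral radius. For a nonempty bounded set $\mathsf{A}$ of $d\times d$ complex matrices, the joint spectral radius is \[\varrho(\mathsf{A})=\lim_{n \to \infty} \sup\left\{\left\|A_{i_n} \cdots A_{i_1}\right\|^{1/n} \colon A_{i_j} \in \mathsf{A}\right\},\] where $\|\cdot\|$ is any matrix norm (the limit exists and is independent of the norm). Here $B^0$ is the identity matrix. *)

theory Defs
  imports "Jordan_Normal_Form.Spectral_Radius" "Jordan_Normal_Form.DL_Rank"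
begin

text \<open>Frobenius norm of a complex matrix (a submultiplicative matrix norm;
  the joint spectral radius does not depend on the chosen norm).\<close>
definition frob_norm :: "complex mat \<Rightarrow> real" where
  "frob_norm M = sqrt (\<Sum>i<dim_row M. \<Sum>j<dim_col M. (cmod (M $$ (i, j)))\<^sup>2)"

definition word_prod :: "nat \<Rightarrow> complex mat list \<Rightarrow> complex mat" where
  "word_prod d ws = foldr (\<lambda>X Y. X * Y) ws (1\<^sub>m d)"

definition joint_spectral_radius :: "nat \<Rightarrow> complex mat set \<Rightarrow> real" where
  "joint_spectral_radius d S =
     lim (\<lambda>n. SUP ws \<in> {ws. length ws = n \<and> set ws \<subseteq> S}. frob_norm (word_prod d ws) powr (1 / real n))"

end

theory Submission
  imports Defs
begin


definition fsq :: "complex mat \<Rightarrow> real" where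
  "fsq M = (\<Sum>i<dim_row M. \<Sum>j<dim_col M. (cmod (M $$ (i, j)))\<^sup>2)"

lemma fsq_nonneg: "fsq M \<ge> 0" unfolding fsq_def by (intro sum_nonneg) auto

lemma frob_fsq: "frob_norm M = sqrt (fsq M)" unfolding frob_norm_def fsq_def by simp

lemma frob_nonneg: "frob_norm M \<ge> 0" by (simp add: frob_fsq fsq_nonneg)

lemma cs_real:
  fixes a b :: "nat \<Rightarrow> real"
  shows "(\<Sum>i\<in>I. a i * b i)\<^sup>2 \<le> (\<Sum>i\<in>I. (a i)\<^sup>2) * (\<Sum>i\<in>I. (b i)\<^sup>2)"
proof (cases "(\<Sum>i\<in>I. (b i)\<^sup>2) > 0")
  case False
  then consider "\<And>i. i\<in>I \<Longrightarrow> b i = 0" | "infinite I"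
    by (metis (mono_tags, lifting) sum_pos2 zero_le_power2 zero_less_power2)
  thus ?thesis
    by fastforce
next
  case True
  define r where "r \<equiv> (\<Sum>i\<in>I. a i * b i) / (\<Sum>i\<in>I. (b i)\<^sup>2)"
  have "0 \<le> (\<Sum>i\<in>I. (a i - r * b i)\<^sup>2)"
    by (simp add: sum_nonneg)
  also have "\<dots> = (\<Sum>i\<in>I. (a i)\<^sup>2 - 2 * r * (a i * b i) + r\<^sup>2 * (b i)\<^sup>2)"
    by (intro sum.cong refl) (simp add: power2_eq_square algebra_simps)
  also have "\<dots> = (\<Sum>i\<in>I. (a i)\<^sup>2) - 2 * r * (\<Sum>i\<in>I. a i * b i) + r\<^sup>2 * (\<Sum>i\<in>I. (b i)\<^sup>2)"
    by (simp add: sum.distrib sum_subtractf sum_distrib_left)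
  also have "\<dots> = (\<Sum>i\<in>I. (a i)\<^sup>2) - ((\<Sum>i\<in>I. a i * b i))\<^sup>2 / (\<Sum>i\<in>I. (b i)\<^sup>2)"
    by (simp add: r_def power2_eq_square)
  finally have "0 \<le> (\<Sum>i\<in>I. (a i)\<^sup>2) - ((\<Sum>i\<in>I. a i * b i))\<^sup>2 / (\<Sum>i\<in>I. (b i)\<^sup>2)" .
  hence "((\<Sum>i\<in>I. a i * b i))\<^sup>2 / (\<Sum>i\<in>I. (b i)\<^sup>2) \<le> (\<Sum>i\<in>I. (a i)\<^sup>2)"
    by (simp add: le_diff_eq)
  thus "((\<Sum>i\<in>I. a i * b i))\<^sup>2 \<le> (\<Sum>i\<in>I. (a i)\<^sup>2) * (\<Sum>i\<in>I. (b i)\<^sup>2)"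
    by (simp add: pos_divide_le_eq True)
qed

lemma cs_cmod: fixes a b :: "nat \<Rightarrow> complex" shows "(cmod (\<Sum>k<m. a k * b k))\<^sup>2 \<le> (\<Sum>k<m. (cmod (a k))\<^sup>2) * (\<Sum>k<m. (cmod (b k))\<^sup>2)"
proof -
  have "cmod (\<Sum>k<m. a k * b k) \<le> (\<Sum>k<m. cmod (a k * b k))"
    by (rule norm_sum)
  also have "\<dots> = (\<Sum>k<m. cmod (a k) * cmod (b k))" by (simp add: norm_mult)
  finally have "(cmod (\<Sum>k<m. a k * b k))\<^sup>2 \<le> (\<Sum>k<m. cmod (a k) * cmod (b k))\<^sup>2"
    by (intro power_mono) auto
  also have "\<dots> \<le> (\<Sum>k<m. (cmod (a k))\<^sup>2) * (\<Sum>k<m. (cmod (b k))\<^sup>2)"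
    by (rule cs_real[of "\<lambda>k. cmod (a k)" "\<lambda>k. cmod (b k)"])
  finally show ?thesis .
qed

lemma fsq_mult: assumes X: "X \<in> carrier_mat n m" and Y: "Y \<in> carrier_mat m p"
  shows "fsq (X * Y) \<le> fsq X * fsq Y"
proof -
  have e: "(X*Y) $$ (i,j) = (\<Sum>k<m. X $$ (i,k) * Y $$ (k,j))" if "i < n" "j < p" for i j
  proof -
    have "(X*Y) $$ (i,j) = row X i \<bullet> col Y j" using X Y that by simp
    also have "\<dots> = (\<Sum>k<m. X $$ (i,k) * Y $$ (k,j))"
      unfolding scalar_prod_def using X Y that by (simp add: lessThan_atLeast0)
    finally show ?thesis .
  qed
  have "fsq (X * Y) = (\<Sum>i<n. \<Sum>j<p. (cmod (\<Sum>k<m. X $$ (i,k) * Y $$ (k,j)))\<^sup>2)"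
    unfolding fsq_def using X Y e by simp
  also have "\<dots> \<le> (\<Sum>i<n. \<Sum>j<p. (\<Sum>k<m. (cmod (X $$ (i,k)))\<^sup>2) * (\<Sum>k<m. (cmod (Y $$ (k,j)))\<^sup>2))"
    by (intro sum_mono cs_cmod)
  also have "\<dots> = (\<Sum>i<n. \<Sum>k<m. (cmod (X $$ (i,k)))\<^sup>2) * (\<Sum>j<p. \<Sum>k<m. (cmod (Y $$ (k,j)))\<^sup>2)"
    by (simp add: sum_product)
  also have "(\<Sum>j<p. \<Sum>k<m. (cmod (Y $$ (k,j)))\<^sup>2) = fsq Y"
    unfolding fsq_def using Y by (subst sum.swap) simp
  also have "(\<Sum>i<n. \<Sum>k<m. (cmod (X $$ (i,k)))\<^sup>2) = fsq X"
    unfolding fsq_def using X by simp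
  finally show ?thesis .
qed

lemma frob_mult: assumes X: "X \<in> carrier_mat n m" and Y: "Y \<in> carrier_mat m p"
  shows "frob_norm (X * Y) \<le> frob_norm X * frob_norm Y"
  unfolding frob_fsq real_sqrt_mult[symmetric] using fsq_mult[OF X Y] by simp

lemma frob_smult: "frob_norm (c \<cdot>\<^sub>m M) = cmod c * frob_norm M"
proof -
  have "fsq (c \<cdot>\<^sub>m M) = (cmod c)\<^sup>2 * fsq M"
    unfolding fsq_def by (simp add: sum_distrib_left norm_mult power_mult_distrib)
  thus ?thesis unfolding frob_fsq by (simp add: real_sqrt_mult)
qed

lemma frob_one: "frob_norm (1\<^sub>m d) = sqrt d"
proof -
  have "fsq (1\<^sub>m d) = (\<Sum>i<d. \<Sum>j<d. if i = j then 1 else 0)"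
    unfolding fsq_def by (intro sum.cong refl) auto
  also have "\<dots> = d" by simp
  finally show ?thesis unfolding frob_fsq by simp
qed

lemma frob_pos: assumes "i < dim_row M" "j < dim_col M" "M $$ (i,j) \<noteq> 0"
  shows "frob_norm M > 0"
proof -
  have "0 < (cmod (M $$ (i,j)))\<^sup>2" using assms by simp
  also have "\<dots> \<le> (\<Sum>j<dim_col M. (cmod (M $$ (i, j)))\<^sup>2)"
    using assms by (intro member_le_sum) auto
  also have "\<dots> \<le> fsq M" unfolding fsq_def
    using assms by (intro member_le_sum[where f = "\<lambda>i. \<Sum>j<dim_col M. (cmod (M $$ (i, j)))\<^sup>2"]) (auto intro: sum_nonneg)
  finally show ?thesis unfolding frob_fsq by simp
qed

lemma frob_bound: assumes "M \<in> carrier_mat n n" "\<And>i j. i < n \<Longrightarrow> j < n \<Longrightarrow> cmod (M $$ (i,j)) \<le> b"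
  shows "frob_norm M \<le> n * b"
proof -
  have b: "b \<ge> 0" if "n > 0" using assms(2)[of 0 0] that by (meson norm_ge_zero order_trans)
  have "fsq M = (\<Sum>i<n. \<Sum>j<n. (cmod (M $$ (i, j)))\<^sup>2)" unfolding fsq_def using assms(1) by simp
  also have "\<dots> \<le> (\<Sum>i<n. \<Sum>j<n. b\<^sup>2)"
    by (intro sum_mono power_mono) (use assms in auto)
  also have "\<dots> = (n * b)\<^sup>2" by (simp add: power2_eq_square)
  finally have "sqrt (fsq M) \<le> sqrt ((n*b)\<^sup>2)" by (rule real_sqrt_le_mono)
  also have "\<dots> = n * b" using b by (cases "n = 0") auto
  finally show ?thesis unfolding frob_fsq .
qed



lemma pow_mat_Suc_left: assumes "A \<in> carrier_mat n n"
  shows "A ^\<^sub>m Suc k = A * A ^\<^sub>m k"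
proof (induction k)
  case 0 thus ?case using assms by simp
next
  case (Suc k)
  have "A ^\<^sub>m Suc (Suc k) = (A * A ^\<^sub>m k) * A" using Suc by simp
  also have "\<dots> = A * (A ^\<^sub>m k * A)" using assms by (simp add: assoc_mult_mat[of _ n n _ n _ n])
  finally show ?case by simp
qed

lemma pow_mat_smult: fixes A :: "complex mat" assumes "A \<in> carrier_mat n n"
  shows "(c \<cdot>\<^sub>m A) ^\<^sub>m k = (c ^ k) \<cdot>\<^sub>m (A ^\<^sub>m k)"
proof (induction k)
  case 0 thus ?case using assms by (auto intro!: eq_matI)
next
  case (Suc k)
  have "(c \<cdot>\<^sub>m A) ^\<^sub>m Suc k = ((c ^ k) \<cdot>\<^sub>m (A ^\<^sub>m k)) * (c \<cdot>\<^sub>m A)" using Suc by simp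
  also have "\<dots> = c ^ k \<cdot>\<^sub>m (A ^\<^sub>m k * (c \<cdot>\<^sub>m A))"
    by (rule mult_smult_assoc_mat) (use assms in auto)
  also have "A ^\<^sub>m k * (c \<cdot>\<^sub>m A) = c \<cdot>\<^sub>m (A ^\<^sub>m k * A)"
    by (rule mult_smult_distrib) (use assms in auto)
  also have "c ^ k \<cdot>\<^sub>m (c \<cdot>\<^sub>m (A ^\<^sub>m k * A)) = (c ^ Suc k) \<cdot>\<^sub>m (A ^\<^sub>m Suc k)"
    by (auto intro!: eq_matI)
  finally show ?case .
qed

lemma eig_le_sr: assumes M: "M \<in> carrier_mat n n" and ev: "eigenvector M v mu"
  shows "cmod mu \<le> spectral_radius M"
proof -
  have e: "eigenvalue M mu" using ev unfolding eigenvalue_def by auto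
  have n: "n > 0" by (rule eigenvalue_imp_nonzero_dim[OF M e])
  have "norm mu \<in> norm ` spectrum M" using e unfolding spectrum_def by auto
  from spectral_radius_mem_max(2)[OF M n this] show ?thesis by simp
qed

lemma eig_ex: assumes M: "M \<in> carrier_mat n n" and n: "n > 0"
  shows "\<exists>mu v. eigenvector M v mu \<and> cmod mu = spectral_radius M"
proof -
  from spectral_radius_mem_max(1)[OF M n] obtain mu where "mu \<in> spectrum M" "spectral_radius M = norm mu"
    by auto
  thus ?thesis unfolding spectrum_def eigenvalue_def by auto
qed

lemma sr_nonneg: assumes M: "M \<in> carrier_mat n n" and n: "n > 0"
  shows "spectral_radius M \<ge> 0"
  using eig_ex[OF M n] by (metis norm_ge_zero)

lemma eig_frob: assumes M: "M \<in> carrier_mat n n" and ev: "eigenvector M v mu"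
  shows "cmod mu \<le> frob_norm M"
proof -
  from ev M have v: "v \<in> carrier_vec n" and v0: "v \<noteq> 0\<^sub>v n" and Mv: "M *\<^sub>v v = mu \<cdot>\<^sub>v v"
    unfolding eigenvector_def by auto
  have n: "n > 0" by (rule eigenvalue_imp_nonzero_dim[OF M]) (use ev in \<open>auto simp: eigenvalue_def\<close>)
  obtain i where i: "i < n" "v $ i \<noteq> 0" using v v0 by (metis carrier_vecD eq_vecI index_zero_vec(1) index_zero_vec(2))
  define X where "X = mat n n (\<lambda>(i,j). v $ i)"
  have X: "X \<in> carrier_mat n n" unfolding X_def by simp
  have colX: "col X j = v" if "j < n" for j
    using that v unfolding X_def by (auto intro!: eq_vecI)
  have MX: "M * X = mu \<cdot>\<^sub>m X"
  proof (rule eq_matI)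
    fix a b assume ab: "a < dim_row (mu \<cdot>\<^sub>m X)" "b < dim_col (mu \<cdot>\<^sub>m X)"
    hence "(M * X) $$ (a,b) = row M a \<bullet> col X b" using M X by simp
    also have "\<dots> = (M *\<^sub>v v) $ a" using colX ab M X by simp
    also have "\<dots> = mu * v $ a" using Mv ab X v by simp
    also have "\<dots> = (mu \<cdot>\<^sub>m X) $$ (a,b)" using ab X unfolding X_def by simp
    finally show "(M * X) $$ (a,b) = (mu \<cdot>\<^sub>m X) $$ (a,b)" .
  qed (use M X in auto)
  have Xpos: "frob_norm X > 0" by (rule frob_pos[of i X 0]) (use i n X in \<open>auto simp: X_def\<close>)
  have "cmod mu * frob_norm X = frob_norm (M * X)" using MX frob_smult by simp
  also have "\<dots> \<le> frob_norm M * frob_norm X" by (rule frob_mult[OF M X])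
  finally show ?thesis using Xpos by simp
qed

lemma sr_le_frob: assumes M: "M \<in> carrier_mat n n" and n: "n > 0"
  shows "spectral_radius M \<le> frob_norm M"
  using eig_ex[OF M n] eig_frob[OF M] by metis

lemma eig_pow_frob: assumes M: "M \<in> carrier_mat n n" and ev: "eigenvector M v mu"
  shows "cmod mu ^ q \<le> frob_norm (M ^\<^sub>m q)"
proof -
  have "eigenvector (M ^\<^sub>m q) v (mu ^ q)"
    using ev eigenvector_pow[OF M ev, of q] M unfolding eigenvector_def by auto
  from eig_frob[OF pow_carrier_mat[OF M] this] show ?thesis by (simp add: norm_power)
qed

lemma gelfand_bound: assumes B: "B \<in> carrier_mat n n" and n: "n > 0" and s: "spectral_radius B < s"
  shows "\<exists>C. C \<ge> 1 \<and> (\<forall>k. frob_norm (B ^\<^sub>m k) \<le> C * s ^ k)"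
proof -
  have s0: "s > 0" using sr_nonneg[OF B n] s by simp
  define B' where "B' = (complex_of_real (1/s)) \<cdot>\<^sub>m B"
  have B': "B' \<in> carrier_mat n n" unfolding B'_def using B by simp
  have "spectral_radius B' < 1"
  proof -
    obtain mu v where ev: "eigenvector B' v mu" and mu: "cmod mu = spectral_radius B'"
      using eig_ex[OF B' n] by auto
    from ev B' have v: "v \<in> carrier_vec n" and v0: "v \<noteq> 0\<^sub>v n" and Mv: "B' *\<^sub>v v = mu \<cdot>\<^sub>v v"
      unfolding eigenvector_def by auto
    have "B *\<^sub>v v = (of_real s * mu) \<cdot>\<^sub>v v"
    proof (rule eq_vecI)
      fix i assume i: "i < dim_vec ((of_real s * mu) \<cdot>\<^sub>v v)"
      hence i': "i < n" using v by simp
      have "(B' *\<^sub>v v) $ i = of_real (1/s) * (B *\<^sub>v v) $ i"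
        using i' B v unfolding B'_def by (simp add: scalar_prod_def sum_distrib_left ac_simps)
      hence "of_real (1/s) * (B *\<^sub>v v) $ i = mu * v $ i" using Mv i' v by simp
      have "(B *\<^sub>v v) $ i = of_real s * (of_real (1/s) * (B *\<^sub>v v) $ i)"
        using s0 by (simp add: field_simps)
      also have "\<dots> = of_real s * (mu * v $ i)" using \<open>of_real (1/s) * (B *\<^sub>v v) $ i = mu * v $ i\<close> by simp
      finally have "(B *\<^sub>v v) $ i = of_real s * (mu * v $ i)" .
      thus "(B *\<^sub>v v) $ i = ((of_real s * mu) \<cdot>\<^sub>v v) $ i" using i' v by simp
    qed (use B v in auto)
    hence "eigenvector B v (of_real s * mu)" using v v0 B unfolding eigenvector_def by auto
    from eig_le_sr[OF B this] have "s * cmod mu \<le> spectral_radius B" using s0 by (simp add: norm_mult)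
    with s have "s * cmod mu < s * 1" by linarith
    hence "cmod mu < 1" using mult_less_cancel_left_pos[OF s0] by blast
    with mu show ?thesis by simp
  qed
  from spectral_radius_jnf_norm_bound_less_1_upper_triangular[OF B' this]
  obtain c where c: "\<And>k. norm_bound (B' ^\<^sub>m k) c" by auto
  have Bk: "B ^\<^sub>m k = (of_real s ^ k) \<cdot>\<^sub>m (B' ^\<^sub>m k)" for k
  proof -
    have "B = of_real s \<cdot>\<^sub>m B'" unfolding B'_def using s0 B by (auto intro!: eq_matI)
    hence "B ^\<^sub>m k = (of_real s \<cdot>\<^sub>m B') ^\<^sub>m k" by simp
    also have "\<dots> = (of_real s ^ k) \<cdot>\<^sub>m (B' ^\<^sub>m k)" by (rule pow_mat_smult[OF B'])
    finally show ?thesis .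
  qed
  have c0: "c \<ge> 0" using c[of 0] B' n unfolding norm_bound_def
    by (metis norm_ge_zero order_trans pow_mat_dim_square(1) pow_mat_dim_square(2))
  show ?thesis
  proof (intro exI[of _ "max 1 (n * c)"] conjI allI)
    fix k
    have "frob_norm (B ^\<^sub>m k) \<le> n * (s ^ k * c)"
    proof (rule frob_bound)
      show "B ^\<^sub>m k \<in> carrier_mat n n" using B by simp
      fix i j assume ij: "i < n" "j < n"
      have "cmod ((B ^\<^sub>m k) $$ (i,j)) = s ^ k * cmod ((B' ^\<^sub>m k) $$ (i,j))"
        unfolding Bk using ij B' s0 by (simp add: norm_mult norm_power)
      also have "\<dots> \<le> s ^ k * c" using c[of k] ij B' s0 unfolding norm_bound_def
        by (intro mult_left_mono) auto
      finally show "cmod ((B ^\<^sub>m k) $$ (i,j)) \<le> s ^ k * c" .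
    qed
    also have "\<dots> = (n * c) * s ^ k" by simp
    also have "\<dots> \<le> max 1 (n * c) * s ^ k" using s0 by (intro mult_right_mono) auto
    finally show "frob_norm (B ^\<^sub>m k) \<le> max 1 (n * c) * s ^ k" .
  qed simp
qed



lemma rank1_col_mult: fixes A :: "complex mat"
  assumes A: "A \<in> carrier_mat d d" and r: "vec_space.rank d A = 1"
    and u: "u = col A j0" and j0: "j0 < d" and u0: "u \<noteq> 0\<^sub>v d" and j: "j < d"
  shows "\<exists>k. \<forall>i<d. A $$ (i,j) = k * u $ i"
proof -
  interpret vec_space "TYPE(complex)" d .
  define c where "c = col A j"
  have uc: "u \<in> carrier_vec d" "c \<in> carrier_vec d" using A u c_def by auto
  show ?thesis
  proof (cases "c = u")
    case True
    thus ?thesis by (intro exI[of _ 1]) (use A j c_def in auto)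
  next
    case False
    have sub: "{u, c} \<subseteq> set (cols A)" using u c_def j j0 A
      by (auto simp: cols_def)
    have "\<not> lin_indpt {u, c}"
    proof
      assume "lin_indpt {u, c}"
      from rank_ge_card_indpt[OF A sub this] False r show False by simp
    qed
    hence ld: "lin_dep {u,c}" by simp
    define M where "M = mat_of_cols d [u, c]"
    have M: "M \<in> carrier_mat d 2"
    proof -
      have "M \<in> carrier_mat d (length [u,c])" unfolding M_def by (rule mat_of_cols_carrier)
      thus ?thesis by (simp add: numeral_2_eq_2)
    qed
    have cM: "cols M = [u, c]" unfolding M_def using uc by simp
    from lin_depE[OF M, unfolded cM] ld False obtain v where
      v: "v \<in> carrier_vec 2" "v \<noteq> 0\<^sub>v 2" "M *\<^sub>v v = 0\<^sub>v d" by auto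
    have eq: "u $ i * v $ 0 + c $ i * v $ 1 = 0" if i: "i < d" for i
    proof -
      have "(M *\<^sub>v v) $ i = 0" using v i by simp
      moreover have "(M *\<^sub>v v) $ i = u $ i * v $ 0 + c $ i * v $ 1"
        using i v(1) uc unfolding M_def by (simp add: scalar_prod_def mat_of_cols_def numeral_2_eq_2 atLeast0LessThan lessThan_Suc)
      ultimately show ?thesis by simp
    qed
    have v1: "v $ 1 \<noteq> 0"
    proof
      assume v1: "v $ 1 = 0"
      have "v $ 0 \<noteq> 0"
      proof
        assume v0: "v $ 0 = 0"
        have "v = 0\<^sub>v 2"
        proof (rule eq_vecI)
          fix i assume "i < dim_vec (0\<^sub>v 2 :: complex vec)"
          hence "i = 0 \<or> i = 1" by auto
          thus "v $ i = 0\<^sub>v 2 $ i" using v0 v1 by auto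
        qed (use v(1) in auto)
        thus False using v(2) by simp
      qed
      hence "u $ i = 0" if "i < d" for i using eq[OF that] v1 by simp
      hence "u = 0\<^sub>v d" using uc by (auto intro!: eq_vecI)
      thus False using u0 by simp
    qed
    show ?thesis
    proof (intro exI[of _ "- v $ 0 / v $ 1"] allI impI)
      fix i assume i: "i < d"
      have "A $$ (i,j) = c $ i" using i j A c_def by simp
      also have "\<dots> = - v $ 0 / v $ 1 * u $ i" using eq[OF i] v1 by (simp add: field_simps add_eq_0_iff)
      finally show "A $$ (i,j) = - v $ 0 / v $ 1 * u $ i" .
    qed
  qed
qed

lemma rank1_struct: fixes A :: "complex mat"
  assumes A: "A \<in> carrier_mat d d" and r: "vec_space.rank d A = 1"
  shows "\<exists>u g. d > 0 \<and> u \<in> carrier_vec d \<and> u \<noteq> 0\<^sub>v d \<and> (\<forall>i<d. \<forall>j<d. A $$ (i,j) = u $ i * g j)"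
proof -
  have "A \<noteq> 0\<^sub>m d d"
  proof
    assume "A = 0\<^sub>m d d"
    moreover have "vec_space.rank d (0\<^sub>m d d :: complex mat) = 0" by (rule vec_space.rank_0I)
    ultimately show False using r by simp
  qed
  then obtain i0 j0 where ij: "i0 < d" "j0 < d" "A $$ (i0,j0) \<noteq> 0"
    using A by (metis carrier_matD(1) carrier_matD(2) eq_matI index_zero_mat(1) index_zero_mat(2) index_zero_mat(3))
  define u where "u = col A j0"
  have u: "u \<in> carrier_vec d" using A u_def by auto
  have u0: "u \<noteq> 0\<^sub>v d"
  proof
    assume "u = 0\<^sub>v d"
    hence "u $ i0 = 0" using ij by simp
    thus False using ij A u_def by simp
  qed
  have "\<forall>j. \<exists>k. j < d \<longrightarrow> (\<forall>i<d. A $$ (i,j) = k * u $ i)"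
    using rank1_col_mult[OF A r u_def ij(2) u0] by blast
  then obtain g where g: "\<And>j. j < d \<Longrightarrow> \<forall>i<d. A $$ (i,j) = g j * u $ i" by metis
  show ?thesis using ij u u0 g by (intro exI[of _ u] exI[of _ g]) (auto simp: mult.commute)
qed



lemma mult_entry: assumes X: "X \<in> carrier_mat n m" and Y: "Y \<in> carrier_mat m p" and i: "i < n" and j: "j < p"
  shows "(X*Y) $$ (i,j) = (\<Sum>k<m. X $$ (i,k) * Y $$ (k,j))"
proof -
  have "(X*Y) $$ (i,j) = row X i \<bullet> col Y j" using X Y i j by simp
  also have "\<dots> = (\<Sum>k<m. X $$ (i,k) * Y $$ (k,j))"
    unfolding scalar_prod_def using X Y i j by (simp add: lessThan_atLeast0)
  finally show ?thesis .
qed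

lemma word_prod_Nil[simp]: "word_prod d [] = 1\<^sub>m d" unfolding word_prod_def by simp
lemma word_prod_Cons[simp]: "word_prod d (x # ws) = x * word_prod d ws" unfolding word_prod_def by simp

lemma word_prod_carrier: "set ws \<subseteq> carrier_mat d d \<Longrightarrow> word_prod d ws \<in> carrier_mat d d"
  by (induction ws) auto

lemma word_prod_append: assumes "set ws \<subseteq> carrier_mat d d" "set vs \<subseteq> carrier_mat d d"
  shows "word_prod d (ws @ vs) = word_prod d ws * word_prod d vs"
  using assms
proof (induction ws)
  case Nil thus ?case using word_prod_carrier[OF Nil(2)] by simp
next
  case (Cons x ws)
  have x: "x \<in> carrier_mat d d" and ws: "set ws \<subseteq> carrier_mat d d" using Cons by auto
  have "word_prod d ((x # ws) @ vs) = x * (word_prod d ws * word_prod d vs)" using Cons ws by simp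
  also have "\<dots> = x * word_prod d ws * word_prod d vs"
    using x word_prod_carrier[OF ws] word_prod_carrier[OF Cons(3)] by (simp add: assoc_mult_mat[of _ d d _ d _ d])
  finally show ?case by simp
qed

lemma word_prod_replicate: assumes B: "B \<in> carrier_mat d d"
  shows "word_prod d (replicate k B) = B ^\<^sub>m k"
  by (induction k) (use B pow_mat_Suc_left[OF B] in auto)

lemma word_prod_concat: assumes "set w \<subseteq> carrier_mat d d"
  shows "word_prod d (concat (replicate q w)) = (word_prod d w) ^\<^sub>m q"
proof (induction q)
  case 0 thus ?case using word_prod_carrier[OF assms] by simp
next
  case (Suc q)
  have "word_prod d (concat (replicate (Suc q) w)) = word_prod d w * word_prod d (concat (replicate q w))"
  proof -
    have "set (concat (replicate q w)) \<subseteq> carrier_mat d d" using assms by auto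
    from word_prod_append[OF assms this] show ?thesis by simp
  qed
  also have "\<dots> = (word_prod d w) ^\<^sub>m Suc q"
    using Suc pow_mat_Suc_left[OF word_prod_carrier[OF assms]] by simp
  finally show ?case .
qed

lemma word_prod_bound: assumes "set ws \<subseteq> carrier_mat d d" "\<And>x. x \<in> set ws \<Longrightarrow> frob_norm x \<le> M" "M \<ge> 0"
  shows "frob_norm (word_prod d ws) \<le> sqrt d * M ^ length ws"
  using assms
proof (induction ws)
  case Nil thus ?case by (simp add: frob_one)
next
  case (Cons x ws)
  have x: "x \<in> carrier_mat d d" and ws: "set ws \<subseteq> carrier_mat d d" using Cons by auto
  have "frob_norm (word_prod d (x # ws)) \<le> frob_norm x * frob_norm (word_prod d ws)"
    using frob_mult[OF x word_prod_carrier[OF ws]] by simp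
  also have "\<dots> \<le> M * (sqrt d * M ^ length ws)"
    using Cons ws by (intro mult_mono) (auto simp: frob_nonneg)
  finally show ?case by (simp add: ac_simps)
qed

context
  fixes A :: "complex mat" and d :: nat and u :: "complex vec" and g :: "nat \<Rightarrow> complex"
  assumes A: "A \<in> carrier_mat d d" and u: "u \<in> carrier_vec d"
    and Aug: "\<And>i j. i < d \<Longrightarrow> j < d \<Longrightarrow> A $$ (i,j) = u $ i * g j"
begin

definition tau :: "complex mat \<Rightarrow> complex" where
  "tau X = (\<Sum>l<d. \<Sum>k<d. g k * X $$ (k,l) * u $ l)"

lemma AX_entry: assumes X: "X \<in> carrier_mat d d" and i: "i < d" and l: "l < d"
  shows "(A * X) $$ (i,l) = u $ i * (\<Sum>k<d. g k * X $$ (k,l))"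
proof -
  have "(A * X) $$ (i,l) = (\<Sum>k<d. A $$ (i,k) * X $$ (k,l))" by (rule mult_entry[OF A X i l])
  also have "\<dots> = (\<Sum>k<d. u $ i * (g k * X $$ (k,l)))" using i by (intro sum.cong refl) (simp add: Aug)
  also have "\<dots> = u $ i * (\<Sum>k<d. g k * X $$ (k,l))" by (simp add: sum_distrib_left)
  finally show ?thesis .
qed

lemma AXA: assumes X: "X \<in> carrier_mat d d"
  shows "A * X * A = tau X \<cdot>\<^sub>m A"
proof (rule eq_matI)
  fix i j assume "i < dim_row (tau X \<cdot>\<^sub>m A)" "j < dim_col (tau X \<cdot>\<^sub>m A)"
  hence i: "i < d" and j: "j < d" using A by auto
  have AX: "A * X \<in> carrier_mat d d" using A X by simp
  have "(A * X * A) $$ (i,j) = (\<Sum>l<d. (A * X) $$ (i,l) * A $$ (l,j))" by (rule mult_entry[OF AX A i j])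
  also have "\<dots> = (\<Sum>l<d. (u $ i * g j) * (\<Sum>k<d. g k * X $$ (k,l) * u $ l))"
    using i j by (intro sum.cong refl) (simp add: AX_entry[OF X] Aug sum_distrib_left sum_distrib_right ac_simps)
  also have "\<dots> = (u $ i * g j) * tau X" unfolding tau_def by (simp add: sum_distrib_left)
  also have "\<dots> = (tau X \<cdot>\<^sub>m A) $$ (i,j)" using i j A by (simp add: Aug)
  finally show "(A * X * A) $$ (i,j) = (tau X \<cdot>\<^sub>m A) $$ (i,j)" .
qed (use A X in auto)

lemma tau_eig: assumes X: "X \<in> carrier_mat d d" and u0: "u \<noteq> 0\<^sub>v d"
  shows "cmod (tau X) \<le> spectral_radius (A * X)"
proof -
  have AX: "A * X \<in> carrier_mat d d" using A X by simp
  have "(A * X) *\<^sub>v u = tau X \<cdot>\<^sub>v u"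
  proof (rule eq_vecI)
    fix i assume "i < dim_vec (tau X \<cdot>\<^sub>v u)"
    hence i: "i < d" using u by simp
    have "((A * X) *\<^sub>v u) $ i = (\<Sum>l<d. (A * X) $$ (i,l) * u $ l)"
    proof -
      have "((A * X) *\<^sub>v u) $ i = row (A * X) i \<bullet> u" by (rule index_mult_mat_vec) (use i A in simp)
      also have "\<dots> = (\<Sum>l<d. (A * X) $$ (i,l) * u $ l)"
        unfolding scalar_prod_def lessThan_atLeast0 using i AX u by (intro sum.cong) (auto, metis carrier_matD(1) carrier_matD(2) index_row(1))
      finally show ?thesis .
    qed
    also have "\<dots> = (\<Sum>l<d. u $ i * (\<Sum>k<d. g k * X $$ (k,l) * u $ l))"
      using i by (intro sum.cong refl) (simp add: AX_entry[OF X] sum_distrib_left sum_distrib_right ac_simps)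
    also have "\<dots> = u $ i * tau X" unfolding tau_def by (simp add: sum_distrib_left)
    finally show "((A * X) *\<^sub>v u) $ i = (tau X \<cdot>\<^sub>v u) $ i" using i u by (simp add: mult.commute)
  qed (use AX u in auto)
  hence "eigenvector (A * X) u (tau X)" using u u0 AX unfolding eigenvector_def by auto
  from eig_le_sr[OF AX this] show ?thesis .
qed

end



context
  fixes A B :: "complex mat" and d :: nat and r C :: real and c :: "nat \<Rightarrow> complex"
  assumes A: "A \<in> carrier_mat d d" and B: "B \<in> carrier_mat d d"
    and r: "r > 0" and C: "C \<ge> 1"
    and hB: "\<And>k. frob_norm (B ^\<^sub>m k) \<le> C * r ^ k"
    and hc: "\<And>k. A * B ^\<^sub>m k * A = c k \<cdot>\<^sub>m A"
    and hcr: "\<And>k. cmod (c k) \<le> r ^ (k + 1)"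
begin

lemma up1: "set ws \<subseteq> {A, B} \<Longrightarrow> frob_norm (A * B ^\<^sub>m k * word_prod d ws) \<le> frob_norm A * C * r ^ (k + length ws)"
proof (induction ws arbitrary: k)
  case Nil
  have "A * B ^\<^sub>m k * word_prod d [] = A * B ^\<^sub>m k" using A B by simp
  hence "frob_norm (A * B ^\<^sub>m k * word_prod d []) \<le> frob_norm A * frob_norm (B ^\<^sub>m k)"
    using frob_mult[OF A pow_carrier_mat[OF B]] by simp
  also have "\<dots> \<le> frob_norm A * (C * r ^ k)" by (intro mult_left_mono hB frob_nonneg)
  finally show ?case by simp
next
  case (Cons x ws)
  have ws: "set ws \<subseteq> {A,B}" and x: "x = A \<or> x = B" using Cons by auto
  have wsc: "set ws \<subseteq> carrier_mat d d" using ws A B by auto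
  define P where "P = word_prod d ws"
  have P: "P \<in> carrier_mat d d" unfolding P_def by (rule word_prod_carrier[OF wsc])
  have Bk: "B ^\<^sub>m k \<in> carrier_mat d d" using B by simp
  from x show ?case
  proof
    assume xB: "x = B"
    have ABk: "A * B ^\<^sub>m k \<in> carrier_mat d d" using A Bk by simp
    have "A * B ^\<^sub>m k * word_prod d (x # ws) = A * B ^\<^sub>m k * (B * P)" using xB P_def by simp
    also have "\<dots> = A * B ^\<^sub>m k * B * P" by (rule assoc_mult_mat[OF ABk B P, symmetric])
    also have "A * B ^\<^sub>m k * B = A * (B ^\<^sub>m k * B)" by (rule assoc_mult_mat[OF A Bk B])
    also have "\<dots> = A * B ^\<^sub>m Suc k" by simp
    finally have "frob_norm (A * B ^\<^sub>m k * word_prod d (x # ws)) = frob_norm (A * B ^\<^sub>m Suc k * word_prod d ws)"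
      using P_def by simp
    also have "\<dots> \<le> frob_norm A * C * r ^ (Suc k + length ws)" by (rule Cons.IH[OF ws])
    finally show ?thesis by simp
  next
    assume xA: "x = A"
    have "A * B ^\<^sub>m k * word_prod d (x # ws) = A * B ^\<^sub>m k * (A * P)" using xA P_def by simp
    also have "\<dots> = (A * B ^\<^sub>m k * A) * P"
      by (rule assoc_mult_mat[OF _ A P, of _ d, symmetric]) (use A Bk in simp)
    also have "\<dots> = c k \<cdot>\<^sub>m (A * P)" unfolding hc using A P by (simp add: mult_smult_assoc_mat[of _ d d _ d])
    also have "A * P = A * B ^\<^sub>m 0 * word_prod d ws" using A B P P_def by simp
    finally have "frob_norm (A * B ^\<^sub>m k * word_prod d (x # ws)) = cmod (c k) * frob_norm (A * B ^\<^sub>m 0 * word_prod d ws)"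
      by (simp add: frob_smult)
    also have "\<dots> \<le> r ^ (k + 1) * (frob_norm A * C * r ^ (0 + length ws))"
      using r by (intro mult_mono hcr Cons.IH[OF ws]) (auto simp: frob_nonneg)
    also have "\<dots> = frob_norm A * C * r ^ (k + length (x # ws))" by (simp add: power_add ac_simps)
    finally show ?thesis .
  qed
qed

definition "KK = max C (C * C * frob_norm A / r)"

lemma up2: "set ws \<subseteq> {A, B} \<Longrightarrow> frob_norm (B ^\<^sub>m k * word_prod d ws) \<le> KK * r ^ (k + length ws)"
proof (induction ws arbitrary: k)
  case Nil
  have "frob_norm (B ^\<^sub>m k * word_prod d []) = frob_norm (B ^\<^sub>m k)" using B by simp
  also have "\<dots> \<le> C * r ^ k" by (rule hB)
  also have "\<dots> \<le> KK * r ^ k" unfolding KK_def using r by (intro mult_right_mono) auto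
  finally show ?case by simp
next
  case (Cons x ws)
  have ws: "set ws \<subseteq> {A,B}" and x: "x = A \<or> x = B" using Cons by auto
  have wsc: "set ws \<subseteq> carrier_mat d d" using ws A B by auto
  define P where "P = word_prod d ws"
  have P: "P \<in> carrier_mat d d" unfolding P_def by (rule word_prod_carrier[OF wsc])
  have Bk: "B ^\<^sub>m k \<in> carrier_mat d d" using B by simp
  from x show ?case
  proof
    assume xB: "x = B"
    have "B ^\<^sub>m k * word_prod d (x # ws) = B ^\<^sub>m k * (B * P)" using xB P_def by simp
    also have "\<dots> = (B ^\<^sub>m k * B) * P"
      using B P Bk by (simp add: assoc_mult_mat[of _ d d _ d _ d])
    also have "\<dots> = B ^\<^sub>m Suc k * P" by simp
    finally have "frob_norm (B ^\<^sub>m k * word_prod d (x # ws)) = frob_norm (B ^\<^sub>m Suc k * word_prod d ws)"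
      using P_def by simp
    also have "\<dots> \<le> KK * r ^ (Suc k + length ws)" by (rule Cons.IH[OF ws])
    finally show ?thesis by simp
  next
    assume xA: "x = A"
    have AP: "A * P = A * B ^\<^sub>m 0 * word_prod d ws" using A B P P_def by simp
    have "frob_norm (B ^\<^sub>m k * word_prod d (x # ws)) = frob_norm (B ^\<^sub>m k * (A * P))" using xA P_def by simp
    also have "\<dots> \<le> frob_norm (B ^\<^sub>m k) * frob_norm (A * P)"
      by (rule frob_mult[OF Bk, of _ d]) (use A P in simp)
    also have "\<dots> \<le> (C * r ^ k) * (frob_norm A * C * r ^ (0 + length ws))"
      unfolding AP using C r by (intro mult_mono hB up1 ws) (auto simp: frob_nonneg)
    also have "\<dots> = (C * C * frob_norm A / r) * r ^ (k + length (x # ws))"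
      using r by (simp add: power_add field_simps)
    also have "\<dots> \<le> KK * r ^ (k + length (x # ws))" unfolding KK_def using r by (intro mult_right_mono) auto
    finally show ?thesis .
  qed
qed

lemma up3: "set ws \<subseteq> {A, B} \<Longrightarrow> frob_norm (word_prod d ws) \<le> KK * r ^ length ws"
proof -
  assume ws: "set ws \<subseteq> {A, B}"
  have "word_prod d ws \<in> carrier_mat d d" using ws A B by (intro word_prod_carrier) auto
  hence "word_prod d ws = B ^\<^sub>m 0 * word_prod d ws" using B by simp
  with up2[OF ws, of 0] show ?thesis by simp
qed

lemma KK_pos: "KK > 0" unfolding KK_def using C by auto

end

lemma low_word:
  fixes A B :: "complex mat" and d :: nat and M :: real
  assumes A: "A \<in> carrier_mat d d" and B: "B \<in> carrier_mat d d"
    and w0: "set w0 \<subseteq> {A,B}" "w0 \<noteq> []"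
    and ev: "eigenvector (word_prod d w0) v mu"
    and M: "M \<ge> 1" "frob_norm A \<le> M" "frob_norm B \<le> M"
  shows "\<exists>ws. length ws = n \<and> set ws \<subseteq> {A,B} \<and>
     cmod mu ^ (n div length w0 + 1) \<le> frob_norm (word_prod d ws) * (sqrt d * M ^ length w0)"
proof -
  define p where "p = length w0"
  define q where "q = n div p + 1"
  have p: "p > 0" using w0 p_def by auto
  define w where "w = concat (replicate q w0)"
  have lw: "length w = q * p" unfolding w_def p_def by (simp add: length_concat sum_list_replicate)
  have nq: "n \<le> q * p" unfolding q_def using p
    by (metis add.commute div_mult_mod_eq le_add2 less_imp_le_nat mod_less_divisor mult_Suc nat_add_left_cancel_le plus_1_eq_Suc)
  have qp: "q * p \<le> n + p" unfolding q_def using p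
    by (metis add.commute add_mult_distrib le_add2 mult_1 nat_add_left_cancel_le div_mult_mod_eq div_mult_self1_is_m mult.commute)
  have w0c: "set w0 \<subseteq> carrier_mat d d" using w0 A B by auto
  have wc: "set w \<subseteq> carrier_mat d d" unfolding w_def using w0c by auto
  have sw: "set w \<subseteq> {A,B}" unfolding w_def using w0 by (induction q) auto
  define ws where "ws = take n w"
  define rs where "rs = drop n w"
  have wsrs: "w = ws @ rs" unfolding ws_def rs_def by simp
  have wsc: "set ws \<subseteq> carrier_mat d d" "set rs \<subseteq> carrier_mat d d" using wc wsrs by auto
  have W: "word_prod d w0 \<in> carrier_mat d d" by (rule word_prod_carrier[OF w0c])
  have "cmod mu ^ q \<le> frob_norm (word_prod d w0 ^\<^sub>m q)" by (rule eig_pow_frob[OF W ev])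
  also have "word_prod d w0 ^\<^sub>m q = word_prod d w" unfolding w_def by (rule word_prod_concat[OF w0c, symmetric])
  also have "\<dots> = word_prod d ws * word_prod d rs" unfolding wsrs by (rule word_prod_append[OF wsc])
  also have "frob_norm \<dots> \<le> frob_norm (word_prod d ws) * frob_norm (word_prod d rs)"
    by (rule frob_mult[OF word_prod_carrier[OF wsc(1)] word_prod_carrier[OF wsc(2)]])
  also have "\<dots> \<le> frob_norm (word_prod d ws) * (sqrt d * M ^ length rs)"
  proof (intro mult_left_mono frob_nonneg word_prod_bound[OF wsc(2)])
    fix x assume "x \<in> set rs"
    hence "x \<in> set w" using wsrs by auto
    hence "x = A \<or> x = B" using sw by auto
    thus "frob_norm x \<le> M" using M by auto
  qed (use M in auto)
  also have "\<dots> \<le> frob_norm (word_prod d ws) * (sqrt d * M ^ p)"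
  proof -
    have "length rs \<le> p" unfolding rs_def using lw qp by simp
    hence "M ^ length rs \<le> M ^ p" using M by (intro power_increasing) auto
    thus ?thesis by (intro mult_left_mono frob_nonneg) auto
  qed
  finally have main: "cmod mu ^ q \<le> frob_norm (word_prod d ws) * (sqrt d * M ^ p)" .
  have "length ws = n" unfolding ws_def using lw nq by simp
  moreover have "set ws \<subseteq> {A,B}" using wsrs sw by auto
  ultimately show ?thesis using main unfolding q_def p_def by blast
qed



lemma pw1: fixes x :: real assumes "x \<ge> 0" "m > 0"
  shows "(x powr (1 / real m)) ^ m = x"
proof (cases "x = 0")
  case True thus ?thesis using assms by simp
next
  case False
  hence x: "x > 0" using assms by simp
  have "(x powr (1 / real m)) ^ m = (x powr (1 / real m)) powr real m"
    by (rule powr_realpow[symmetric]) (use x in simp)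
  also have "\<dots> = x" using assms x by (simp add: powr_powr)
  finally show ?thesis .
qed

lemma pw2: fixes K y :: real assumes "K \<ge> 0" "y > 0" "n > 0"
  shows "(K * y ^ n) powr (1 / real n) = K powr (1 / real n) * y"
proof -
  have "(K * y ^ n) powr (1 / real n) = K powr (1 / real n) * (y ^ n) powr (1 / real n)"
    by (rule powr_mult)
  also have "(y ^ n) powr (1 / real n) = (y powr real n) powr (1 / real n)"
    using assms by (simp add: powr_realpow)
  also have "\<dots> = y" using assms by (simp add: powr_powr)
  finally show ?thesis .
qed

lemma root_const_lim: fixes K :: real assumes "K > 0"
  shows "(\<lambda>n. K powr (1 / real n)) \<longlonglongrightarrow> 1"
proof -
  have "(\<lambda>n. K powr (1 / real n)) \<longlonglongrightarrow> K powr 0"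
    by (rule tendsto_powr[OF tendsto_const]) (use assms lim_1_over_n in auto)
  thus ?thesis using assms by simp
qed

lemma jsr_core:
  fixes A B :: "complex mat" and d :: nat and L :: real and u :: "complex vec" and g :: "nat \<Rightarrow> complex"
    and w0 :: "complex mat list"
  assumes A: "A \<in> carrier_mat d d" and B: "B \<in> carrier_mat d d" and d: "d > 0"
    and u: "u \<in> carrier_vec d" and u0: "u \<noteq> 0\<^sub>v d"
    and Aug: "\<And>i j. i < d \<Longrightarrow> j < d \<Longrightarrow> A $$ (i,j) = u $ i * g j"
    and L: "L \<ge> 0" and LB: "spectral_radius B \<le> L"
    and Lc: "\<And>k. spectral_radius (A * B ^\<^sub>m k) \<le> L ^ (k + 1)"
    and w0: "w0 \<noteq> []" "set w0 \<subseteq> {A, B}"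
    and Lw: "spectral_radius (word_prod d w0) = L ^ length w0"
  shows "joint_spectral_radius d {A, B} = L"
proof -
  define S where "S = (\<lambda>n::nat. {ws. length ws = n \<and> set ws \<subseteq> {A,B}})"
  define f where "f = (\<lambda>n::nat. SUP ws \<in> S n. frob_norm (word_prod d ws) powr (1 / real n))"
  have finS: "finite (S n)" for n
    unfolding S_def using finite_lists_length_eq[of "{A,B}" n] by (simp add: conj_commute)
  have neS: "S n \<noteq> {}" for n unfolding S_def by (auto intro!: exI[of _ "replicate n A"])
  have f_ge: "frob_norm (word_prod d ws) powr (1 / real n) \<le> f n" if "ws \<in> S n" for ws n
    unfolding f_def by (rule cSUP_upper[OF that]) (intro bdd_above_finite finite_imageI finS)
  have f_le: "f n \<le> b" if "\<And>ws. ws \<in> S n \<Longrightarrow> frob_norm (word_prod d ws) powr (1 / real n) \<le> b" for n b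
    unfolding f_def by (rule cSUP_least[OF neS that])
  have f_nonneg: "f n \<ge> 0" for n
  proof -
    obtain ws where "ws \<in> S n" using neS by blast
    from f_ge[OF this] show ?thesis by (meson order_trans powr_ge_zero)
  qed
  have upper: "eventually (\<lambda>n. f n < a) sequentially" if a: "L < a" for a
  proof -
    define r where "r = (L + a) / 2"
    have r: "r > 0" "L < r" "r < a" unfolding r_def using a L by auto
    from gelfand_bound[OF B d] LB r obtain C where C: "C \<ge> 1" "\<And>k. frob_norm (B ^\<^sub>m k) \<le> C * r ^ k"
      by (meson le_less_trans)
    define c where "c = (\<lambda>k. tau d u g (B ^\<^sub>m k))"
    have hc: "A * B ^\<^sub>m k * A = c k \<cdot>\<^sub>m A" for k unfolding c_def
      by (rule AXA[OF A u Aug]) (use B in auto)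
    have hcr: "cmod (c k) \<le> r ^ (k + 1)" for k
    proof -
      have "cmod (c k) \<le> spectral_radius (A * B ^\<^sub>m k)" unfolding c_def
        by (rule tau_eig[OF A u Aug _ u0]) (use B in auto)
      also have "\<dots> \<le> L ^ (k + 1)" by (rule Lc)
      also have "\<dots> \<le> r ^ (k + 1)" using L r by (intro power_mono) auto
      finally show ?thesis .
    qed
    obtain K where K: "K > 0" "\<And>ws. set ws \<subseteq> {A,B} \<Longrightarrow> frob_norm (word_prod d ws) \<le> K * r ^ length ws"
      using up3[OF A B r(1) C hc hcr] KK_pos[OF A B r(1) C hc hcr] by blast
    have lim: "(\<lambda>n. K powr (1 / real n) * r) \<longlonglongrightarrow> 1 * r"
      by (intro tendsto_mult root_const_lim K tendsto_const)
    hence ev: "eventually (\<lambda>n. K powr (1 / real n) * r < a) sequentially"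
      using r by (intro order_tendstoD(2)) auto
    show ?thesis
      using ev eventually_ge_at_top[of "1::nat"]
    proof eventually_elim
      case (elim n)
      have "f n \<le> K powr (1 / real n) * r"
      proof (rule f_le)
        fix ws assume ws: "ws \<in> S n"
        hence "frob_norm (word_prod d ws) powr (1 / real n) \<le> (K * r ^ n) powr (1 / real n)"
          using K(2)[of ws] unfolding S_def by (intro powr_mono2) (auto simp: frob_nonneg)
        also have "\<dots> = K powr (1 / real n) * r" using K r elim by (intro pw2) auto
        finally show "frob_norm (word_prod d ws) powr (1 / real n) \<le> K powr (1 / real n) * r" .
      qed
      thus ?case using elim by simp
    qed
  qed
  have lower: "eventually (\<lambda>n. a < f n) sequentially" if a: "a < L" for a
  proof (cases "L > 0")
    case False
    hence "a < 0" using a L by linarith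
    hence "\<forall>n. a < f n" using f_nonneg by (meson less_le_trans)
    thus ?thesis by (simp add: always_eventually)
  next
    case True
    hence Lp: "L > 0" .
    define W where "W = word_prod d w0"
    define p where "p = length w0"
    have p: "p > 0" using w0 p_def by auto
    have W: "W \<in> carrier_mat d d" unfolding W_def using w0 A B by (intro word_prod_carrier) auto
    obtain mu v where ev: "eigenvector W v mu" and mu: "cmod mu = spectral_radius W"
      using eig_ex[OF W d] by blast
    have mu': "cmod mu = L ^ p" using mu Lw unfolding W_def p_def by simp
    define M where "M = max 1 (max (frob_norm A) (frob_norm B))"
    have M: "M \<ge> 1" "frob_norm A \<le> M" "frob_norm B \<le> M" unfolding M_def by auto
    define D where "D = sqrt d * M ^ p"
    have D: "D > 0" unfolding D_def using d M by auto
    define c0 where "c0 = min 1 (L ^ p) / D"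
    have c0: "c0 > 0" unfolding c0_def using D Lp by auto
    have wit: "\<exists>ws. ws \<in> S n \<and> c0 * L ^ n \<le> frob_norm (word_prod d ws)" for n
    proof -
      from low_word[OF A B w0(2) w0(1) ev[unfolded W_def] M, of n]
      obtain ws where ws: "length ws = n" "set ws \<subseteq> {A,B}"
        and le: "cmod mu ^ (n div p + 1) \<le> frob_norm (word_prod d ws) * D"
        unfolding p_def D_def by blast
      define q where "q = n div p + 1"
      have nq: "n \<le> q * p" unfolding q_def using p
        by (metis add.commute div_mult_mod_eq le_add2 less_imp_le_nat mod_less_divisor mult_Suc nat_add_left_cancel_le plus_1_eq_Suc)
      have qp: "q * p \<le> n + p" unfolding q_def using p
        by (metis add.commute add_mult_distrib le_add2 mult_1 nat_add_left_cancel_le div_mult_mod_eq div_mult_self1_is_m mult.commute)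
      have key: "min 1 (L ^ p) * L ^ n \<le> L ^ (q * p)"
      proof (cases "L \<ge> 1")
        case True
        hence "L ^ n \<le> L ^ (q * p)" using nq by (intro power_increasing) auto
        moreover have "min 1 (L ^ p) * L ^ n \<le> L ^ n" using Lp by (intro mult_left_le_one_le) auto
        ultimately show ?thesis by linarith
      next
        case False
        hence "L ^ (n + p) \<le> L ^ (q * p)" using qp Lp by (intro power_decreasing) auto
        moreover have "min 1 (L ^ p) * L ^ n \<le> L ^ p * L ^ n" using Lp by (intro mult_right_mono) auto
        ultimately show ?thesis by (simp add: power_add mult.commute)
      qed
      have "cmod mu ^ q = L ^ (q * p)" using mu' by (simp add: power_mult mult.commute)
      hence "min 1 (L ^ p) * L ^ n \<le> frob_norm (word_prod d ws) * D" using key le unfolding q_def by simp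
      hence "c0 * L ^ n \<le> frob_norm (word_prod d ws)" unfolding c0_def using D
        by (simp add: divide_simps mult.commute)
      thus ?thesis using ws unfolding S_def by blast
    qed
    have lim: "(\<lambda>n. c0 powr (1 / real n) * L) \<longlonglongrightarrow> 1 * L"
      by (intro tendsto_mult root_const_lim c0 tendsto_const)
    hence ev: "eventually (\<lambda>n. a < c0 powr (1 / real n) * L) sequentially"
      using a by (intro order_tendstoD(1)) auto
    show ?thesis
      using ev eventually_ge_at_top[of "1::nat"]
    proof eventually_elim
      case (elim n)
      obtain ws where ws: "ws \<in> S n" "c0 * L ^ n \<le> frob_norm (word_prod d ws)" using wit by blast
      have "c0 powr (1 / real n) * L = (c0 * L ^ n) powr (1 / real n)" using c0 Lp elim by (intro pw2[symmetric]) auto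
      also have "\<dots> \<le> frob_norm (word_prod d ws) powr (1 / real n)" using ws c0 Lp by (intro powr_mono2) auto
      also have "\<dots> \<le> f n" by (rule f_ge[OF ws(1)])
      finally show ?case using elim by simp
    qed
  qed
  have "f \<longlonglongrightarrow> L" by (rule order_tendstoI[OF lower upper])
  hence "lim f = L" by (rule limI)
  thus ?thesis unfolding joint_spectral_radius_def f_def S_def by simp
qed



theorem corollary4:
  fixes A B :: "complex mat" and d :: nat
  assumes "A \<in> carrier_mat d d" and "B \<in> carrier_mat d d"
    and "vec_space.rank d A = 1"
  shows "joint_spectral_radius d {A, B} = spectral_radius B \<or>
    (\<exists>n::nat. joint_spectral_radius d {A, B} = spectral_radius (A * B ^\<^sub>m n) powr (1 / real (n + 1)))"
proof -
  note A = assms(1) and B = assms(2)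
  from rank1_struct[OF A assms(3)] obtain u g where d: "d > 0" and u: "u \<in> carrier_vec d"
    and u0: "u \<noteq> 0\<^sub>v d" and Aug: "\<And>i j. i < d \<Longrightarrow> j < d \<Longrightarrow> A $$ (i,j) = u $ i * g j" by blast
  define c where "c = (\<lambda>n. spectral_radius (A * B ^\<^sub>m n) powr (1 / real (n + 1)))"
  have ABc: "A * B ^\<^sub>m n \<in> carrier_mat d d" for n using A B by simp
  have c0: "c n \<ge> 0" for n unfolding c_def by simp
  have cpow: "c n ^ (n + 1) = spectral_radius (A * B ^\<^sub>m n)" for n
    unfolding c_def by (rule pw1) (use sr_nonneg[OF ABc d] in auto)
  have rB: "spectral_radius B \<ge> 0" by (rule sr_nonneg[OF B d])
  have wpA: "word_prod d (A # replicate m B) = A * B ^\<^sub>m m" for m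
    using word_prod_replicate[OF B] by simp
  show ?thesis
  proof (cases "\<forall>n. c n \<le> spectral_radius B")
    case True
    have "joint_spectral_radius d {A, B} = spectral_radius B"
    proof (rule jsr_core[OF A B d u u0 Aug rB order_refl])
      fix k
      have "spectral_radius (A * B ^\<^sub>m k) = c k ^ (k + 1)" by (rule cpow[symmetric])
      also have "\<dots> \<le> spectral_radius B ^ (k + 1)" using True c0 by (intro power_mono) auto
      finally show "spectral_radius (A * B ^\<^sub>m k) \<le> spectral_radius B ^ (k + 1)" .
    next
      show "[B] \<noteq> []" "set [B] \<subseteq> {A, B}" by auto
      show "spectral_radius (word_prod d [B]) = spectral_radius B ^ length [B]" using B by simp
    qed
    thus ?thesis by simp
  next
    case False
    then obtain N where N: "c N > spectral_radius B" by (auto simp: not_le)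
    define s where "s = (spectral_radius B + c N) / 2"
    have s: "spectral_radius B < s" "s < c N" "s > 0" unfolding s_def using N rB by auto
    from gelfand_bound[OF B d s(1)] obtain C where C: "C \<ge> 1" "\<And>k. frob_norm (B ^\<^sub>m k) \<le> C * s ^ k"
      by blast
    define SS where "SS = {n. c N \<le> c n}"
    define q where "q = c N / s"
    have q: "q > 1" unfolding q_def using s by simp
    define K where "K = frob_norm A * C / c N"
    obtain N0 where N0: "K < q ^ N0" using real_arch_pow[OF q] by blast
    have SS_bound: "n < N0" if "n \<in> SS" for n
    proof (rule ccontr)
      assume "\<not> n < N0"
      hence "q ^ N0 \<le> q ^ n" using q by (intro power_increasing) auto
      have cNpos: "c N > 0" using s by simp
      have "c N ^ (n + 1) \<le> c n ^ (n + 1)" using that cNpos unfolding SS_def by (intro power_mono) auto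
      also have "\<dots> = spectral_radius (A * B ^\<^sub>m n)" by (rule cpow)
      also have "\<dots> \<le> frob_norm (A * B ^\<^sub>m n)" by (rule sr_le_frob[OF ABc d])
      also have "\<dots> \<le> frob_norm A * frob_norm (B ^\<^sub>m n)" by (rule frob_mult[OF A pow_carrier_mat[OF B]])
      also have "\<dots> \<le> frob_norm A * (C * s ^ n)" by (intro mult_left_mono C(2) frob_nonneg)
      finally have ineq: "c N ^ (n + 1) \<le> frob_norm A * (C * s ^ n)" .
      have e1: "c N ^ n = q ^ n * s ^ n" unfolding q_def using s by (simp add: power_divide)
      have "c N * q ^ n * s ^ n = c N ^ (n + 1)" using e1 by (simp add: mult.assoc)
      also note ineq
      also have "frob_norm A * (C * s ^ n) = (frob_norm A * C) * s ^ n" by (simp add: mult.assoc)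
      finally have "c N * q ^ n * s ^ n \<le> (frob_norm A * C) * s ^ n" .
      hence "c N * q ^ n \<le> frob_norm A * C" using s by (simp add: mult_le_cancel_right)
      hence "q ^ n \<le> K" unfolding K_def using cNpos by (simp add: field_simps)
      with N0 \<open>q ^ N0 \<le> q ^ n\<close> show False by simp
    qed
    have finSS: "finite SS" using SS_bound by (meson finite_lessThan finite_subset lessThan_iff subsetI)
    have NSS: "N \<in> SS" unfolding SS_def by simp
    define mx where "mx = Max (c ` SS)"
    have "mx \<in> c ` SS" unfolding mx_def using finSS NSS by (intro Max_in) auto
    then obtain m where m: "m \<in> SS" "c m = mx" by auto
    have cm: "c n \<le> c m" for n
    proof (cases "n \<in> SS")
      case True thus ?thesis using m finSS unfolding mx_def by simp
    next
      case False thus ?thesis using m unfolding SS_def by auto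
    qed
    have cmB: "spectral_radius B \<le> c m" using cm[of N] N by simp
    have "joint_spectral_radius d {A, B} = c m"
    proof (rule jsr_core[OF A B d u u0 Aug c0 cmB])
      fix k
      have "spectral_radius (A * B ^\<^sub>m k) = c k ^ (k + 1)" by (rule cpow[symmetric])
      also have "\<dots> \<le> c m ^ (k + 1)" using cm c0 by (intro power_mono) auto
      finally show "spectral_radius (A * B ^\<^sub>m k) \<le> c m ^ (k + 1)" .
    next
      show "A # replicate m B \<noteq> []" "set (A # replicate m B) \<subseteq> {A, B}" by auto
      show "spectral_radius (word_prod d (A # replicate m B)) = c m ^ length (A # replicate m B)"
        using cpow[of m] wpA[of m] by simp
    qed
    thus ?thesis unfolding c_def by blast
  qed
qed

end
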